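(* Let $P=\operatorname{conv}(W(\Lambda))$ be a full-dimensional $W$-symmetric polytope, let $F$ be a face of $P$, and let $\alpha\in R$. The following are equivalent: (1) $r_\alpha(F)=F$; (2) the hyperplane $H_\alpha$ passes through the barycenter of $F$; (3) $H_\alpha$ passes through a relative interior point of $F$. If moreover $P$ is non-degenerate, these are also equivalent to: (4) $F\cap H_\alpha\neq\emptyset$; and in that case (when $P$ is non-degenerate and the conditions hold), $\langle \ell_{F'},\alpha\rangle=0$ for every facet $F'$ of $P$ containing $F$.
   Context: $V$ is a real Euclidean space of dimension $n$, $R\subset V$ a reduced root system spanning $V$ (not necessarily crystallographic) with simple system $S=\{\alpha_1,\dots,\alpha_n\}$; $r_\alpha(x)=x-\frac{2\langle x,\alpha\rangle}{\langle \alpha,\alpha\rangle}\alpha$, $H_\alpha$ is the hyperplane fixed pointwise by $r_\alpha$, and $W$ is the group generated by the $r_{\alpha_i}$. $C_S=\{x:\langle x,\alpha_i\rangle\ge0\ \forall i\}$, $\Lambda\subset C_S$ finite. $P$ is non-degenerate if no vertex of $P$ lies on the boundary of $C_S$. $\ell_{F'}$ denotes an outward normal vector of the facet $F'$. *)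

theory Defs
  imports "HOL-Analysis.Analysis"
begin

definition root_refl :: "'a::euclidean_space \<Rightarrow> 'a \<Rightarrow> 'a" where
  "root_refl a x = x - (2 * (x \<bullet> a) / (a \<bullet> a)) *\<^sub>R a"

definition hyp :: "'a::euclidean_space \<Rightarrow> 'a set" where
  "hyp a = {x. x \<bullet> a = 0}"

text \<open>Reduced (not necessarily crystallographic) root system spanning V.\<close>
definition root_system :: "'a::euclidean_space set \<Rightarrow> bool" where
  "root_system R \<longleftrightarrow> finite R \<and> 0 \<notin> R \<and> span R = UNIV
     \<and> (\<forall>a\<in>R. \<forall>c::real. c *\<^sub>R a \<in> R \<longleftrightarrow> (c = 1 \<or> c = -1))
     \<and> (\<forall>a\<in>R. \<forall>b\<in>R. root_refl a b \<in> R)"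

definition simple_system :: "'a::euclidean_space set \<Rightarrow> 'a set \<Rightarrow> bool" where
  "simple_system R S \<longleftrightarrow> S \<subseteq> R \<and> independent S
     \<and> (\<forall>b\<in>R. \<exists>c. b = (\<Sum>s\<in>S. c s *\<^sub>R s) \<and> ((\<forall>s\<in>S. c s \<ge> 0) \<or> (\<forall>s\<in>S. c s \<le> 0)))"

inductive_set weyl_group :: "'a::euclidean_space set \<Rightarrow> ('a \<Rightarrow> 'a) set" for S where
  id: "id \<in> weyl_group S"
| step: "s \<in> S \<Longrightarrow> w \<in> weyl_group S \<Longrightarrow> root_refl s \<circ> w \<in> weyl_group S"

definition fund_chamber :: "'a::euclidean_space set \<Rightarrow> 'a set" where
  "fund_chamber S = {x. \<forall>s\<in>S. x \<bullet> s \<ge> 0}"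

definition barycenter :: "'a::euclidean_space set \<Rightarrow> 'a" where
  "barycenter F = (1 / real (card {v. v extreme_point_of F})) *\<^sub>R (\<Sum>{v. v extreme_point_of F})"

definition nondegenerate :: "'a::euclidean_space set \<Rightarrow> 'a set \<Rightarrow> bool" where
  "nondegenerate S P \<longleftrightarrow> (\<forall>v. v extreme_point_of P \<longrightarrow> v \<notin> frontier (fund_chamber S))"

definition outward_normal :: "'a::euclidean_space \<Rightarrow> 'a set \<Rightarrow> 'a set \<Rightarrow> bool" where
  "outward_normal l F P \<longleftrightarrow> l \<noteq> 0 \<and> (\<exists>b. P \<subseteq> {x. l \<bullet> x \<le> b} \<and> F = P \<inter> {x. l \<bullet> x = b})"

end

theory Submission
  imports Defs
begin

lemma refl_linear: "linear (root_refl a)"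
  unfolding root_refl_def
  by (rule linearI) (auto simp: algebra_simps inner_add_left add_divide_distrib)

lemma refl_inner_a: "a \<noteq> 0 \<Longrightarrow> root_refl a x \<bullet> a = - (x \<bullet> a)"
  unfolding root_refl_def by (simp add: inner_diff_left)

lemma refl_invol: "a \<noteq> 0 \<Longrightarrow> root_refl a (root_refl a x) = x"
proof -
  assume a: "a \<noteq> 0"
  have "root_refl a (root_refl a x) = root_refl a x - (2 * (root_refl a x \<bullet> a) / (a \<bullet> a)) *\<^sub>R a"
    by (simp add: root_refl_def)
  also have "\<dots> = x" using a by (simp add: refl_inner_a root_refl_def algebra_simps)
  finally show ?thesis .
qed

lemma refl_inner: "a \<noteq> 0 \<Longrightarrow> root_refl a x \<bullet> root_refl a y = x \<bullet> y"
  unfolding root_refl_def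
  by (simp add: inner_diff_left inner_diff_right algebra_simps inner_commute power2_eq_square)

lemma refl_fix: "x \<bullet> a = 0 \<Longrightarrow> root_refl a x = x"
  by (simp add: root_refl_def)

lemma refl_fix_iff: "a \<noteq> 0 \<Longrightarrow> root_refl a x = x \<longleftrightarrow> x \<bullet> a = 0"
  by (auto simp: root_refl_def)

lemma refl_neg: "root_refl (-a) = root_refl a"
  by (auto simp: root_refl_def fun_eq_iff)

lemma refl_conj:
  assumes "linear w" "\<And>x y. w x \<bullet> w y = x \<bullet> y"
  shows "root_refl (w b) (w x) = w (root_refl b x)"
  using assms unfolding root_refl_def by (simp add: linear_diff linear_scale)


lemma W_comp: "w1 \<in> weyl_group S \<Longrightarrow> w2 \<in> weyl_group S \<Longrightarrow> w1 \<circ> w2 \<in> weyl_group S"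
  by (induction w1 rule: weyl_group.induct) (auto simp: comp_assoc intro: weyl_group.intros)

lemma W_gen: "s \<in> S \<Longrightarrow> root_refl s \<in> weyl_group S"
  using weyl_group.step[OF _ weyl_group.id] by fastforce

lemma W_orth:
  assumes "w \<in> weyl_group S" "0 \<notin> S"
  shows "linear w \<and> (\<forall>x y. w x \<bullet> w y = x \<bullet> y)"
  using assms
proof (induction w rule: weyl_group.induct)
  case id then show ?case using linear_id by (simp add: id_def)
next
  case (step s w)
  then have "s \<noteq> 0" by auto
  then have "linear (root_refl s \<circ> w)" using step refl_linear[of s] linear_compose by blast
  moreover have "\<forall>x y. (root_refl s \<circ> w) x \<bullet> (root_refl s \<circ> w) y = x \<bullet> y"
    using step \<open>s \<noteq> 0\<close> by (simp add: refl_inner)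
  ultimately show ?case by blast
qed

lemma W_inv:
  assumes "w \<in> weyl_group S" "0 \<notin> S"
  shows "\<exists>w'\<in>weyl_group S. w' \<circ> w = id \<and> w \<circ> w' = id"
  using assms
proof (induction w rule: weyl_group.induct)
  case id then show ?case by (metis comp_id weyl_group.id)
next
  case (step s w)
  then obtain w' where w': "w' \<in> weyl_group S" "w' \<circ> w = id" "w \<circ> w' = id" by blast
  have s0: "s \<noteq> 0" using step by auto
  have ii: "root_refl s \<circ> root_refl s = id" using refl_invol[OF s0] by (auto simp: fun_eq_iff)
  have "w' \<circ> root_refl s \<in> weyl_group S" using W_comp[OF w'(1) W_gen[OF step(1)]] .
  moreover have "(w' \<circ> root_refl s) \<circ> (root_refl s \<circ> w) = id"
    using w' ii by (metis comp_assoc comp_id)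
  moreover have "(root_refl s \<circ> w) \<circ> (w' \<circ> root_refl s) = id"
    using w' ii by (metis comp_assoc comp_id)
  ultimately show ?case by blast
qed

lemma W_R:
  assumes "w \<in> weyl_group S" "S \<subseteq> R" "\<forall>a\<in>R. \<forall>b\<in>R. root_refl a b \<in> R" "x \<in> R"
  shows "w x \<in> R"
  using assms by (induction w rule: weyl_group.induct) auto

lemma W_finite:
  assumes "S \<subseteq> R" "\<forall>a\<in>R. \<forall>b\<in>R. root_refl a b \<in> R" "finite R" "span R = UNIV" "0 \<notin> S"
  shows "finite (weyl_group S)"
proof -
  have "inj_on (\<lambda>w. restrict w R) (weyl_group S)"
  proof (rule inj_onI)
    fix w1 w2 assume w: "w1 \<in> weyl_group S" "w2 \<in> weyl_group S" "restrict w1 R = restrict w2 R"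
    have l: "linear w1" "linear w2" using W_orth w assms by blast+
    have eq: "\<forall>x\<in>R. w1 x = w2 x" using w(3) by (metis restrict_apply')
    show "w1 = w2"
    proof
      fix x
      have "x \<in> span R" using assms by auto
      then show "w1 x = w2 x" using real_vector.linear_eq_on_span[OF l, of R x] eq by blast
    qed
  qed
  moreover have "(\<lambda>w. restrict w R) ` weyl_group S \<subseteq> (\<Pi>\<^sub>E i\<in>R. R)"
    using W_R assms by auto
  moreover have "finite (\<Pi>\<^sub>E i\<in>R. R)" using assms by (simp add: finite_PiE)
  ultimately show ?thesis by (meson finite_imageD finite_subset)
qed


lemma coef_unique:
  assumes "independent S" "finite S" "(\<Sum>s\<in>S. c s *\<^sub>R s) = (\<Sum>s\<in>S. d s *\<^sub>R s)" "t \<in> S"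
  shows "c t = d t"
proof (rule ccontr)
  assume ne: "c t \<noteq> d t"
  have "(\<Sum>s\<in>S. (c s - d s) *\<^sub>R s) = 0"
    using assms(3) by (simp add: scaleR_diff_left sum_subtractf)
  then have "\<exists>u. (\<exists>v\<in>S. u v \<noteq> 0) \<and> (\<Sum>v\<in>S. u v *\<^sub>R v) = 0"
    using ne assms(4) by (intro exI[of _ "\<lambda>s. c s - d s"]) auto
  then have "dependent S" using real_vector.dependent_finite[OF assms(2)] by blast
  then show False using assms(1) by blast
qed

lemma sum_single:
  assumes "finite S" "s \<in> S"
  shows "(\<Sum>t\<in>S. (if t = s then k else 0) *\<^sub>R t) = k *\<^sub>R (s::'a::real_vector)"
proof -
  have "(\<Sum>t\<in>S. (if t = s then k else 0) *\<^sub>R t) = (\<Sum>t\<in>S. if t = s then k *\<^sub>R t else 0)"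
    by (rule sum.cong) auto
  then show ?thesis using assms by (simp add: sum.delta)
qed

lemma pos_conj:
  assumes rs: "root_system R" and ss: "simple_system R S"
  shows "\<beta> \<in> R \<Longrightarrow> (\<exists>c. \<beta> = (\<Sum>s\<in>S. c s *\<^sub>R s) \<and> (\<forall>s\<in>S. c s \<ge> 0))
     \<Longrightarrow> \<exists>w\<in>weyl_group S. \<exists>s\<in>S. \<beta> = w s"
proof -
  have SR: "S \<subseteq> R" and indS: "independent S"
    and rep: "\<forall>b\<in>R. \<exists>c. b = (\<Sum>s\<in>S. c s *\<^sub>R s) \<and> ((\<forall>s\<in>S. c s \<ge> 0) \<or> (\<forall>s\<in>S. c s \<le> 0))"
    using ss by (auto simp: simple_system_def)
  have finR: "finite R" and R0: "0 \<notin> R"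
    and red: "\<forall>a\<in>R. \<forall>c::real. c *\<^sub>R a \<in> R \<longleftrightarrow> (c = 1 \<or> c = -1)"
    and clos: "\<forall>a\<in>R. \<forall>b\<in>R. root_refl a b \<in> R"
    using rs by (auto simp: root_system_def)
  have finS: "finite S" using independent_bound[OF indS] by blast
  obtain g where g: "linear g" "\<forall>x\<in>S. g x = (1::real)"
    using real_vector.linear_independent_extend[OF indS, of "\<lambda>_. 1"] by blast
  have gsum: "g (\<Sum>s\<in>S. c s *\<^sub>R s) = (\<Sum>s\<in>S. c s)" for c
    using g by (simp add: real_vector.linear_sum linear_scale)
  show "\<beta> \<in> R \<Longrightarrow> (\<exists>c. \<beta> = (\<Sum>s\<in>S. c s *\<^sub>R s) \<and> (\<forall>s\<in>S. c s \<ge> 0))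
     \<Longrightarrow> \<exists>w\<in>weyl_group S. \<exists>s\<in>S. \<beta> = w s"
  proof (induction "card {\<gamma>\<in>R. g \<gamma> < g \<beta>}" arbitrary: \<beta> rule: less_induct)
    case less
    obtain c where c: "\<beta> = (\<Sum>s\<in>S. c s *\<^sub>R s)" "\<forall>s\<in>S. c s \<ge> 0" using less.prems by blast
    show ?case
    proof (cases "\<beta> \<in> S")
      case True then show ?thesis by (metis id_apply weyl_group.id)
    next
      case False
      have b0: "\<beta> \<noteq> 0" using less.prems R0 by auto
      have "0 < \<beta> \<bullet> \<beta>" using b0 by simp
      also have "\<beta> \<bullet> \<beta> = (\<Sum>s\<in>S. c s * (s \<bullet> \<beta>))"
        by (subst (1) c(1)) (simp add: inner_sum_left)
      finally have pos: "0 < (\<Sum>s\<in>S. c s * (s \<bullet> \<beta>))" .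
      have "\<not> (\<forall>s\<in>S. c s * (s \<bullet> \<beta>) \<le> 0)"
      proof
        assume "\<forall>s\<in>S. c s * (s \<bullet> \<beta>) \<le> 0"
        then have "(\<Sum>s\<in>S. c s * (s \<bullet> \<beta>)) \<le> 0" by (intro sum_nonpos) blast
        then show False using pos by linarith
      qed
      then obtain s where s: "s \<in> S" "c s * (s \<bullet> \<beta>) > 0" by (auto simp: not_le)
      have sb: "s \<bullet> \<beta> > 0" using s c(2) by (auto simp: zero_less_mult_iff)
      have s0: "s \<noteq> 0" using s SR R0 by auto
      define k where "k = 2 * (\<beta> \<bullet> s) / (s \<bullet> s)"
      have k: "k > 0" using sb s0 by (simp add: k_def inner_commute)
      define \<gamma> where "\<gamma> = root_refl s \<beta>"
      have gR: "\<gamma> \<in> R" using clos s SR less.prems by (auto simp: \<gamma>_def)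
      define d where "d = (\<lambda>t. c t - (if t = s then k else 0))"
      have gd: "\<gamma> = (\<Sum>t\<in>S. d t *\<^sub>R t)"
      proof -
        have "(\<Sum>t\<in>S. d t *\<^sub>R t) = (\<Sum>t\<in>S. c t *\<^sub>R t) - (\<Sum>t\<in>S. (if t = s then k else 0) *\<^sub>R t)"
          by (simp add: d_def scaleR_diff_left sum_subtractf)
        also have "(\<Sum>t\<in>S. (if t = s then k else 0) *\<^sub>R t) = k *\<^sub>R s"
          by (rule sum_single[OF finS s(1)])
        finally show ?thesis using c(1) by (simp add: \<gamma>_def root_refl_def k_def)
      qed
      obtain e where e: "\<gamma> = (\<Sum>t\<in>S. e t *\<^sub>R t)" "(\<forall>t\<in>S. e t \<ge> 0) \<or> (\<forall>t\<in>S. e t \<le> 0)"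
        using rep gR by blast
      have de: "\<forall>t\<in>S. d t = e t" using coef_unique[OF indS finS] gd e(1) by metis
      have dpos: "\<forall>t\<in>S. d t \<ge> 0"
      proof (rule ccontr)
        assume "\<not> (\<forall>t\<in>S. d t \<ge> 0)"
        then obtain t0 where "t0 \<in> S" "d t0 < 0" by (auto simp: not_le)
        then have "\<not> (\<forall>t\<in>S. e t \<ge> 0)" using de by force
        then have "\<forall>t\<in>S. e t \<le> 0" using e(2) by blast
        then have dneg: "\<forall>t\<in>S. d t \<le> 0" using de by simp
        have z: "\<forall>t\<in>S. t \<noteq> s \<longrightarrow> c t = 0" using dneg c(2) by (force simp: d_def)
        have "\<beta> = (\<Sum>t\<in>S. (if t = s then c s else 0) *\<^sub>R t)"
          unfolding c(1) by (rule sum.cong) (use z in auto)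
        also have "\<dots> = c s *\<^sub>R s" by (rule sum_single[OF finS s(1)])
        finally have bs: "\<beta> = c s *\<^sub>R s" .
        then have "c s = 1 \<or> c s = -1" using red s SR less.prems by blast
        then have "c s = 1" using c(2) s by force
        then show False using bs False s by simp
      qed
      have ggb: "g \<gamma> < g \<beta>"
      proof -
        have "g \<gamma> = (\<Sum>t\<in>S. d t)" using gd gsum by simp
        also have "\<dots> = (\<Sum>t\<in>S. c t) - k" using s finS
          by (simp add: d_def sum_subtractf sum.delta)
        also have "(\<Sum>t\<in>S. c t) = g \<beta>" using c(1) gsum by simp
        finally show ?thesis using k by simp
      qed
      have "{\<gamma>'\<in>R. g \<gamma>' < g \<gamma>} \<subset> {\<gamma>'\<in>R. g \<gamma>' < g \<beta>}"
        using ggb gR by auto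
      then have "card {\<gamma>'\<in>R. g \<gamma>' < g \<gamma>} < card {\<gamma>'\<in>R. g \<gamma>' < g \<beta>}"
        using finR by (simp add: psubset_card_mono)
      then obtain w t where wt: "w \<in> weyl_group S" "t \<in> S" "\<gamma> = w t"
        using less.hyps[of \<gamma>] gR gd dpos by blast
      have "\<beta> = (root_refl s \<circ> w) t" using wt(3) refl_invol[OF s0, of \<beta>] by (simp add: \<gamma>_def)
      moreover have "root_refl s \<circ> w \<in> weyl_group S" using weyl_group.step[OF s(1) wt(1)] .
      ultimately show ?thesis using wt(2) by blast
    qed
  qed
qed


lemma ext_image:
  assumes "linear f" "inj f"
  shows "f x extreme_point_of f ` S \<longleftrightarrow> x extreme_point_of S"
proof -
  have "{f x} = f ` {x}" by simp
  then show ?thesis using face_of_linear_image[OF assms, of "{x}" S]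
    by (simp add: face_of_singleton)
qed

lemma ext_image_set:
  assumes "linear f" "inj f"
  shows "{v. v extreme_point_of f ` S} = f ` {v. v extreme_point_of S}"
proof
  show "{v. v extreme_point_of f ` S} \<subseteq> f ` {v. v extreme_point_of S}"
  proof
    fix v assume "v \<in> {v. v extreme_point_of f ` S}"
    then have v: "v extreme_point_of f ` S" by simp
    then have "v \<in> f ` S" by (simp add: extreme_point_of_def)
    then obtain x where "v = f x" by blast
    then show "v \<in> f ` {v. v extreme_point_of S}" using v ext_image[OF assms] by auto
  qed
  show "f ` {v. v extreme_point_of S} \<subseteq> {v. v extreme_point_of f ` S}"
    using ext_image[OF assms] by auto
qed

lemma bary_image:
  assumes "linear f" "inj f"
  shows "barycenter (f ` F) = f (barycenter F)"
proof -
  have c: "card (f ` {v. v extreme_point_of F}) = card {v. v extreme_point_of F}"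
    using assms(2) by (simp add: card_image inj_on_subset)
  have s: "\<Sum>(f ` {v. v extreme_point_of F}) = (\<Sum>v\<in>{v. v extreme_point_of F}. f v)"
    using assms(2) by (simp add: sum.reindex inj_on_subset)
  show ?thesis
    unfolding barycenter_def ext_image_set[OF assms] c s
    using assms(1) by (simp add: real_vector.linear_sum linear_scale)
qed

lemma bary_relint:
  fixes F :: "'a::euclidean_space set"
  assumes "polytope F" "F \<noteq> {}"
  shows "barycenter F \<in> rel_interior F"
proof -
  define E where "E = {v. v extreme_point_of F}"
  obtain V where V: "finite V" "F = convex hull V" using assms(1) polytope_def by blast
  have finE: "finite E" unfolding E_def V(2)
    by (rule finite_subset[OF extreme_points_of_convex_hull V(1)])
  have FE: "F = convex hull E" unfolding E_def
    by (rule Krein_Milman_Minkowski) (use assms(1) polytope_imp_compact polytope_imp_convex in auto)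
  have Ene: "E \<noteq> {}" using FE assms(2) by auto
  then have cE: "card E > 0" using finE by (simp add: card_gt_0_iff)
  let ?u = "\<lambda>_::'a. 1 / real (card E)"
  have "barycenter F \<in> {y. \<exists>u. (\<forall>x \<in> E. 0 < u x) \<and> sum u E = 1 \<and> sum (\<lambda>x. u x *\<^sub>R x) E = y}"
    using cE by (intro CollectI exI[of _ ?u]) (auto simp: barycenter_def E_def[symmetric] scaleR_sum_right)
  then have "barycenter F \<in> rel_interior (convex hull E)"
    using explicit_subset_rel_interior_convex_hull_minimal[OF finE] by blast
  then show ?thesis using FE by simp
qed


lemma refl_inj: "a \<noteq> 0 \<Longrightarrow> inj (root_refl a)"
  by (metis injI refl_invol)

lemma refl_linear': "linear (root_refl a)"
  unfolding root_refl_def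
  by (rule linearI) (auto simp: algebra_simps inner_add_left add_divide_distrib)

lemma refl_fix_iff': "a \<noteq> 0 \<Longrightarrow> root_refl a x = x \<longleftrightarrow> x \<bullet> a = 0"
  by (auto simp: root_refl_def)

lemma geom_equiv:
  fixes P F :: "'a::euclidean_space set"
  assumes "polytope P" "a \<noteq> 0" "root_refl a ` P = P" "F face_of P" "F \<noteq> {}"
  shows "(root_refl a ` F = F \<longleftrightarrow> barycenter F \<in> hyp a)
       \<and> (barycenter F \<in> hyp a \<longleftrightarrow> rel_interior F \<inter> hyp a \<noteq> {})"
proof -
  let ?r = "root_refl a"
  have lin: "linear ?r" by (rule refl_linear')
  have inj: "inj ?r" using assms(2) by (rule refl_inj)
  have blin: "bounded_linear ?r" using lin linear_conv_bounded_linear by blast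
  have rF: "?r ` F face_of P" using face_of_linear_image[OF lin inj, of F P] assms(3,4) by simp
  have rFne: "?r ` F \<noteq> {}" using assms(5) by simp
  have polyF: "polytope F" using face_of_polytope_polytope assms(1,4) by blast
  have polyrF: "polytope (?r ` F)" using face_of_polytope_polytope assms(1) rF by blast
  have bF: "barycenter F \<in> rel_interior F" using bary_relint[OF polyF assms(5)] .
  have relr: "rel_interior (?r ` F) = ?r ` rel_interior F"
    using rel_interior_injective_linear_image[OF blin inj] .
  have key: "?r ` F = F" if "x \<in> rel_interior F" "x \<in> hyp a" for x
  proof -
    have "?r x = x" using that(2) refl_fix_iff'[OF assms(2)] by (simp add: hyp_def)
    then have "x \<in> rel_interior (?r ` F)" using relr that(1) by (metis imageI)
    then have "rel_interior (?r ` F) \<inter> rel_interior F \<noteq> {}" using that(1) by blast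
    then show ?thesis using face_of_eq[OF rF assms(4)] by blast
  qed
  have i12: "barycenter F \<in> hyp a" if "?r ` F = F"
  proof -
    have "?r (barycenter F) = barycenter F" using bary_image[OF lin inj, of F] that by simp
    then show ?thesis using refl_fix_iff'[OF assms(2)] by (simp add: hyp_def)
  qed
  have i21: "?r ` F = F" if "barycenter F \<in> hyp a" using key[OF bF that] .
  have i23: "rel_interior F \<inter> hyp a \<noteq> {}" if "barycenter F \<in> hyp a" using bF that by blast
  have i32: "barycenter F \<in> hyp a" if "rel_interior F \<inter> hyp a \<noteq> {}"
    using that key i12 by blast
  show ?thesis using i12 i21 i23 i32 by blast
qed

lemma nondeg_relint:
  fixes P F :: "'a::euclidean_space set"
  assumes "polytope P" "F face_of P" "F \<noteq> {}" "F \<inter> hyp a \<noteq> {}"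
    and nd: "\<forall>v. v extreme_point_of P \<longrightarrow> v \<bullet> a \<noteq> 0"
  shows "rel_interior F \<inter> hyp a \<noteq> {}"
proof -
  define E where "E = {v. v extreme_point_of F}"
  have polyF: "polytope F" using face_of_polytope_polytope assms(1,2) by blast
  have FE: "F = convex hull E" unfolding E_def
    by (rule Krein_Milman_Minkowski) (use polyF polytope_imp_compact polytope_imp_convex in auto)
  have convF: "convex F" using polyF polytope_imp_convex by blast
  have Ena: "\<forall>v\<in>E. v \<bullet> a \<noteq> 0" using nd extreme_point_of_face[OF assms(2)] by (auto simp: E_def)
  obtain x where x: "x \<in> F" "x \<bullet> a = 0" using assms(4) by (auto simp: hyp_def)
  obtain y where y: "y \<in> rel_interior F" using assms(3) convF rel_interior_eq_empty by blast
  have claim: "rel_interior F \<inter> hyp a \<noteq> {}" if yb: "y \<bullet> b > 0" and ab: "hyp b = hyp a"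
     and Enb: "\<forall>v\<in>E. v \<bullet> b \<noteq> 0" and xb: "x \<bullet> b = 0" for b
  proof -
    have "\<exists>v\<in>E. v \<bullet> b < 0"
    proof (rule ccontr)
      assume "\<not> ?thesis"
      then have "E \<subseteq> {z. b \<bullet> z > 0}" using Enb by (force simp: inner_commute)
      then have "convex hull E \<subseteq> {z. b \<bullet> z > 0}" by (rule hull_minimal) (rule convex_halfspace_gt)
      moreover have "x \<in> convex hull E" using x(1) FE by simp
      ultimately have "b \<bullet> x > 0" by blast
      then show False using xb by (simp add: inner_commute)
    qed
    then obtain v where v: "v \<in> E" "v \<bullet> b < 0" by blast
    have "v \<in> convex hull E" using v(1) hull_subset[of E convex] by blast
    then have vF: "v \<in> F" using FE by simp
    define u where "u = (y \<bullet> b) / (y \<bullet> b - v \<bullet> b)"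
    have den: "y \<bullet> b - v \<bullet> b > 0" using yb v(2) by linarith
    have u0: "0 < u" unfolding u_def using den yb by simp
    have u1: "u < 1" unfolding u_def using den v(2) by (simp add: divide_less_eq)
    have ud: "u * (y \<bullet> b - v \<bullet> b) = y \<bullet> b" unfolding u_def using den by simp
    define p where "p = (1 - u) *\<^sub>R y + u *\<^sub>R v"
    have "p \<bullet> b = (1 - u) * (y \<bullet> b) + u * (v \<bullet> b)" by (simp add: p_def inner_add_left)
    also have "\<dots> = y \<bullet> b - u * (y \<bullet> b - v \<bullet> b)" by (simp add: algebra_simps)
    also have "\<dots> = 0" using ud by simp
    finally have pb: "p \<bullet> b = 0" .
    have yv: "y \<noteq> v" using yb v(2) by auto
    have "p \<in> open_segment y v" using u0 u1 yv unfolding in_segment p_def by blast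
    then have "p \<in> rel_interior F"
      using rel_interior_closure_convex_segment[OF convF y] vF closure_subset by blast
    then show ?thesis using pb ab by (auto simp: hyp_def)
  qed
  show ?thesis
  proof (cases "y \<bullet> a = 0")
    case True then show ?thesis using y by (auto simp: hyp_def)
  next
    case False
    then show ?thesis
    proof (cases "y \<bullet> a > 0")
      case True then show ?thesis using claim[of a] Ena x(2) by blast
    next
      case False
      have "y \<bullet> (-a) > 0" using False \<open>y \<bullet> a \<noteq> 0\<close> by simp
      moreover have "hyp (-a) = hyp a" by (auto simp: hyp_def)
      ultimately show ?thesis using claim[of "-a"] Ena x(2) by simp
    qed
  qed
qed


lemma chamber_frontier:
  assumes ss: "simple_system R S" and R0: "0 \<notin> R"
    and lam: "lm \<in> fund_chamber S" and b: "\<beta> \<in> R" and lb: "lm \<bullet> \<beta> = 0"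
  shows "lm \<in> frontier (fund_chamber S)"
proof -
  have SR: "S \<subseteq> R" and indS: "independent S"
    and rep: "\<forall>b\<in>R. \<exists>c. b = (\<Sum>s\<in>S. c s *\<^sub>R s) \<and> ((\<forall>s\<in>S. c s \<ge> 0) \<or> (\<forall>s\<in>S. c s \<le> 0))"
    using ss by (auto simp: simple_system_def)
  have finS: "finite S" using independent_bound[OF indS] by blast
  obtain c where c: "\<beta> = (\<Sum>s\<in>S. c s *\<^sub>R s)" "(\<forall>s\<in>S. c s \<ge> 0) \<or> (\<forall>s\<in>S. c s \<le> 0)"
    using rep b by blast
  have ls: "\<forall>s\<in>S. lm \<bullet> s \<ge> 0" using lam by (simp add: fund_chamber_def)
  have sum0: "(\<Sum>s\<in>S. c s * (lm \<bullet> s)) = 0" using lb c(1) by (simp add: inner_sum_right)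
  have "\<exists>s\<in>S. c s \<noteq> 0"
  proof (rule ccontr)
    assume "\<not> ?thesis"
    then have "\<beta> = 0" using c(1) by simp
    then show False using b R0 by simp
  qed
  then obtain s where s: "s \<in> S" "c s \<noteq> 0" by blast
  have terms: "\<forall>t\<in>S. c t * (lm \<bullet> t) = 0"
  proof (cases "\<forall>s\<in>S. c s \<ge> 0")
    case True
    have h: "\<And>t. t \<in> S \<Longrightarrow> 0 \<le> c t * (lm \<bullet> t)"
      using True ls by (auto intro: mult_nonneg_nonneg)
    show ?thesis using sum_nonneg_eq_0_iff[OF finS h] sum0 by simp
  next
    case False
    then have "\<forall>t\<in>S. c t \<le> 0" using c(2) by blast
    then have h: "\<And>t. t \<in> S \<Longrightarrow> 0 \<le> - (c t * (lm \<bullet> t))"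
      using ls by (auto intro: mult_nonpos_nonneg)
    have "(\<Sum>t\<in>S. - (c t * (lm \<bullet> t))) = 0" using sum0 by (simp add: sum_negf)
    then show ?thesis using sum_nonneg_eq_0_iff[OF finS h] by simp
  qed
  then have lsz: "lm \<bullet> s = 0" using s by force
  have s0: "s \<noteq> 0" using s SR R0 by auto
  have closedC: "closed (fund_chamber S)"
  proof -
    have "fund_chamber S = (\<Inter>s\<in>S. {x. s \<bullet> x \<ge> 0})"
      by (auto simp: fund_chamber_def inner_commute)
    moreover have "closed (\<Inter>s\<in>S. {x. s \<bullet> x \<ge> (0::real)})"
      by (intro closed_INT) (simp add: closed_halfspace_ge)
    ultimately show ?thesis by simp
  qed
  have "lm \<notin> interior (fund_chamber S)"
  proof
    assume "lm \<in> interior (fund_chamber S)"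
    then obtain e where e: "e > 0" "ball lm e \<subseteq> fund_chamber S"
      using mem_interior by blast
    define z where "z = lm - (e / 2 / norm s) *\<^sub>R s"
    have "dist lm z = e / 2" using s0 e(1) by (simp add: z_def dist_norm)
    then have "z \<in> ball lm e" using e(1) by simp
    then have "z \<bullet> s \<ge> 0" using e(2) s(1) by (auto simp: fund_chamber_def)
    moreover have "z \<bullet> s = - (e / 2 / norm s) * (s \<bullet> s)" using lsz by (simp add: z_def inner_diff_left)
    moreover have "(e / 2 / norm s) * (s \<bullet> s) > 0" using s0 e(1) by simp
    ultimately show False by linarith
  qed
  then show ?thesis using lam closedC by (simp add: frontier_def closure_closed)
qed

lemma facet_normal:
  fixes P F :: "'a::euclidean_space set"
  assumes "aff_dim P = DIM('a)" "a \<noteq> 0" "root_refl a ` P = P"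
    and fac: "F facet_of P" and rF: "root_refl a ` F = F" and on: "outward_normal l F P"
  shows "l \<bullet> a = 0"
proof (rule ccontr)
  assume la: "l \<bullet> a \<noteq> 0"
  obtain b where b: "P \<subseteq> {x. l \<bullet> x \<le> b}" "F = P \<inter> {x. l \<bullet> x = b}" and l0: "l \<noteq> 0"
    using on by (auto simp: outward_normal_def)
  have lr: "l \<bullet> root_refl a x = l \<bullet> x - (2 * (x \<bullet> a) / (a \<bullet> a)) * (l \<bullet> a)" for x
    by (simp add: root_refl_def inner_diff_right)
  define H where "H = {x. a \<bullet> x = 0}"
  have FH: "F \<subseteq> H"
  proof
    fix x assume x: "x \<in> F"
    then have "root_refl a x \<in> F" using rF by blast
    then have "l \<bullet> root_refl a x = b" "l \<bullet> x = b" using b(2) x by auto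
    then have "(2 * (x \<bullet> a) / (a \<bullet> a)) * (l \<bullet> a) = 0" using lr[of x] by simp
    then show "x \<in> H" using la assms(2) by (simp add: H_def inner_commute)
  qed
  have affH: "affine H" unfolding H_def by (rule affine_hyperplane)
  have dimH: "aff_dim H = int DIM('a) - 1" unfolding H_def using assms(2) by simp
  have "aff_dim F = aff_dim P - 1" using fac unfolding facet_of_def by blast
  then have dimF: "aff_dim F = int DIM('a) - 1" using assms(1) by simp
  have sub: "affine hull F \<subseteq> H" by (rule hull_minimal[of F H affine, OF FH affH])
  have ahH: "affine hull H = H" using affH by (simp add: hull_same)
  have eqH: "affine hull F = H"
  proof (rule ccontr)
    assume "affine hull F \<noteq> H"
    then have "affine hull F \<subset> affine hull H" using sub ahH by (metis psubsetI)
    then have "aff_dim F < aff_dim H" by (rule aff_dim_psubset)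
    then show False using dimF dimH by simp
  qed
  have Fl: "affine hull F \<subseteq> {x. l \<bullet> x = b}"
    using b(2) by (intro hull_minimal) (auto simp: affine_hyperplane)
  have Hl: "\<forall>z. a \<bullet> z = 0 \<longrightarrow> l \<bullet> z = b" using Fl eqH by (auto simp: H_def)
  have b0: "b = 0" using Hl[rule_format, of 0] by simp
  have PH: "P \<subseteq> H"
  proof
    fix p assume p: "p \<in> P"
    define z where "z = p - ((p \<bullet> a) / (a \<bullet> a)) *\<^sub>R a"
    have "a \<bullet> z = 0" using assms(2) by (simp add: z_def inner_diff_right inner_commute)
    then have "l \<bullet> z = 0" using Hl b0 by simp
    then have lp: "l \<bullet> p = (p \<bullet> a) / (a \<bullet> a) * (l \<bullet> a)" by (simp add: z_def inner_diff_right)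
    have "root_refl a p \<in> P" using p assms(3) by blast
    then have "l \<bullet> root_refl a p \<le> 0" "l \<bullet> p \<le> 0" using b(1) b0 p by auto
    then have "l \<bullet> p = 0" using lr[of p] lp by (simp add: algebra_simps)
    then have "(p \<bullet> a) / (a \<bullet> a) * (l \<bullet> a) = 0" using lp by simp
    then show "p \<in> H" using la assms(2) by (simp add: H_def inner_commute)
  qed
  have "aff_dim P \<le> aff_dim H" using PH by (rule aff_dim_subset)
  then show False using assms(1) dimH by simp
qed


lemma refl_pres:
  assumes rs: "root_system R" and ss: "simple_system R S" and a: "\<alpha> \<in> R"
    and inv: "\<forall>w\<in>weyl_group S. w ` Q \<subseteq> Q"
  shows "root_refl \<alpha> ` Q = Q"
proof -
  have SR: "S \<subseteq> R"
    and rep: "\<forall>b\<in>R. \<exists>c. b = (\<Sum>s\<in>S. c s *\<^sub>R s) \<and> ((\<forall>s\<in>S. c s \<ge> 0) \<or> (\<forall>s\<in>S. c s \<le> 0))"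
    using ss by (auto simp: simple_system_def)
  have R0: "0 \<notin> R"
    and red: "\<forall>a\<in>R. \<forall>c::real. c *\<^sub>R a \<in> R \<longleftrightarrow> (c = 1 \<or> c = -1)"
    using rs by (auto simp: root_system_def)
  have S0: "0 \<notin> S" using SR R0 by auto
  have a0: "\<alpha> \<noteq> 0" using a R0 by auto
  obtain c where c: "\<alpha> = (\<Sum>s\<in>S. c s *\<^sub>R s)" "(\<forall>s\<in>S. c s \<ge> 0) \<or> (\<forall>s\<in>S. c s \<le> 0)"
    using rep a by blast
  obtain \<beta> where b: "\<beta> \<in> R" "\<exists>c. \<beta> = (\<Sum>s\<in>S. c s *\<^sub>R s) \<and> (\<forall>s\<in>S. c s \<ge> 0)"
    "root_refl \<beta> = root_refl \<alpha>"
  proof (cases "\<forall>s\<in>S. c s \<ge> 0")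
    case True then show ?thesis using that[of \<alpha>] a c(1) by blast
  next
    case False
    then have cn: "\<forall>s\<in>S. c s \<le> 0" using c(2) by blast
    have "(-1::real) *\<^sub>R \<alpha> \<in> R" using red a by blast
    then have mR: "-\<alpha> \<in> R" by simp
    have e1: "-\<alpha> = (\<Sum>s\<in>S. (- c s) *\<^sub>R s)" using c(1) by (simp add: sum_negf)
    have e2: "\<forall>s\<in>S. - c s \<ge> 0" using cn by simp
    show ?thesis
    proof (rule that[of "-\<alpha>"])
      show "-\<alpha> \<in> R" by (rule mR)
      show "\<exists>c. -\<alpha> = (\<Sum>s\<in>S. c s *\<^sub>R s) \<and> (\<forall>s\<in>S. c s \<ge> 0)"
        using e1 e2 by (intro exI[of _ "\<lambda>s. - c s"]) simp
      show "root_refl (-\<alpha>) = root_refl \<alpha>" by (rule refl_neg)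
    qed
  qed
  obtain w s where ws: "w \<in> weyl_group S" "s \<in> S" "\<beta> = w s"
    using pos_conj[OF rs ss b(1,2)] by blast
  obtain w' where w': "w' \<in> weyl_group S" "w' \<circ> w = id" "w \<circ> w' = id"
    using W_inv[OF ws(1) S0] by blast
  have wo: "linear w" "\<And>x y. w x \<bullet> w y = x \<bullet> y" using W_orth[OF ws(1) S0] by auto
  have sub: "root_refl \<alpha> ` Q \<subseteq> Q"
  proof
    fix y assume "y \<in> root_refl \<alpha> ` Q"
    then obtain x where x: "x \<in> Q" "y = root_refl \<alpha> x" by blast
    have wx: "w (w' x) = x" using w'(3) by (metis comp_apply id_apply)
    have "y = root_refl (w s) (w (w' x))" using x(2) b(3) ws(3) wx by simp
    also have "\<dots> = w (root_refl s (w' x))" by (rule refl_conj[OF wo])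
    finally have y: "y = w (root_refl s (w' x))" .
    have "w' x \<in> Q" using inv w'(1) x(1) by blast
    then have "root_refl s (w' x) \<in> Q" using inv W_gen[OF ws(2)] by blast
    then show "y \<in> Q" using y inv ws(1) by blast
  qed
  moreover have "Q \<subseteq> root_refl \<alpha> ` Q"
  proof
    fix x assume x: "x \<in> Q"
    have "x = root_refl \<alpha> (root_refl \<alpha> x)" using refl_invol[OF a0] by simp
    moreover have "root_refl \<alpha> x \<in> Q" using sub x by blast
    ultimately show "x \<in> root_refl \<alpha> ` Q" by blast
  qed
  ultimately show ?thesis by blast
qed

theorem lemma2p2:
  fixes R S \<Lambda> F :: "'a::euclidean_space set" and \<alpha> :: 'a
  assumes "root_system R" and "simple_system R S"
    and "finite \<Lambda>" and "\<Lambda> \<subseteq> fund_chamber S"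
    and "aff_dim (convex hull (\<Union>w\<in>weyl_group S. w ` \<Lambda>)) = DIM('a)"
    and "F face_of convex hull (\<Union>w\<in>weyl_group S. w ` \<Lambda>)" and "F \<noteq> {}"
    and "\<alpha> \<in> R"
  shows "(root_refl \<alpha> ` F = F \<longleftrightarrow> barycenter F \<in> hyp \<alpha>)
    \<and> (barycenter F \<in> hyp \<alpha> \<longleftrightarrow> rel_interior F \<inter> hyp \<alpha> \<noteq> {})
    \<and> (nondegenerate S (convex hull (\<Union>w\<in>weyl_group S. w ` \<Lambda>)) \<longrightarrow>
        (rel_interior F \<inter> hyp \<alpha> \<noteq> {} \<longleftrightarrow> F \<inter> hyp \<alpha> \<noteq> {})
        \<and> (root_refl \<alpha> ` F = F \<longrightarrow>
             (\<forall>F' l. F' facet_of (convex hull (\<Union>w\<in>weyl_group S. w ` \<Lambda>)) \<and> F \<subseteq> F'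
                \<and> outward_normal l F' (convex hull (\<Union>w\<in>weyl_group S. w ` \<Lambda>)) \<longrightarrow> l \<bullet> \<alpha> = 0)))"
proof -
  note rs = assms(1) and ss = assms(2)
  define X where "X = (\<Union>w\<in>weyl_group S. w ` \<Lambda>)"
  define P where "P = convex hull X"
  have SR: "S \<subseteq> R" using ss by (auto simp: simple_system_def)
  have finR: "finite R" and R0: "0 \<notin> R" and spanR: "span R = UNIV"
    and clos: "\<forall>a\<in>R. \<forall>b\<in>R. root_refl a b \<in> R"
    using rs by (auto simp: root_system_def)
  have S0: "0 \<notin> S" using SR R0 by auto
  have a0: "\<alpha> \<noteq> 0" using assms(8) R0 by auto
  have finW: "finite (weyl_group S)" using W_finite[OF SR clos finR spanR S0] .
  have finX: "finite X" unfolding X_def using finW assms(3) by blast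
  have polyP: "polytope P" unfolding P_def polytope_def using finX by blast
  have WX: "w ` X \<subseteq> X" if w: "w \<in> weyl_group S" for w
  proof
    fix y assume "y \<in> w ` X"
    then obtain w2 l where "w2 \<in> weyl_group S" "l \<in> \<Lambda>" "y = w (w2 l)" unfolding X_def by blast
    moreover have "w \<circ> w2 \<in> weyl_group S" using W_comp[OF w \<open>w2 \<in> weyl_group S\<close>] .
    ultimately show "y \<in> X" unfolding X_def by (metis UN_I comp_apply image_eqI)
  qed
  have WP: "\<forall>w\<in>weyl_group S. w ` P \<subseteq> P"
  proof
    fix w assume w: "w \<in> weyl_group S"
    have "linear w" using W_orth[OF w S0] by blast
    then have "w ` P = convex hull (w ` X)" unfolding P_def by (rule convex_hull_linear_image)
    also have "\<dots> \<subseteq> convex hull X" using WX[OF w] by (rule hull_mono)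
    finally show "w ` P \<subseteq> P" unfolding P_def .
  qed
  have rP: "root_refl \<alpha> ` P = P" using refl_pres[OF rs ss assms(8) WP] .
  have FP: "F face_of P" using assms(6) unfolding P_def X_def .
  have eqv: "(root_refl \<alpha> ` G = G \<longleftrightarrow> barycenter G \<in> hyp \<alpha>)
       \<and> (barycenter G \<in> hyp \<alpha> \<longleftrightarrow> rel_interior G \<inter> hyp \<alpha> \<noteq> {})"
    if "G face_of P" "G \<noteq> {}" for G
    using geom_equiv[OF polyP a0 rP that] .
  have part3: "(rel_interior F \<inter> hyp \<alpha> \<noteq> {} \<longleftrightarrow> F \<inter> hyp \<alpha> \<noteq> {})
        \<and> (root_refl \<alpha> ` F = F \<longrightarrow>
             (\<forall>F' l. F' facet_of P \<and> F \<subseteq> F' \<and> outward_normal l F' P \<longrightarrow> l \<bullet> \<alpha> = 0))"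
    if nd: "nondegenerate S P"
  proof -
    have ndv: "\<forall>v. v extreme_point_of P \<longrightarrow> v \<bullet> \<alpha> \<noteq> 0"
    proof (intro allI impI notI)
      fix v assume v: "v extreme_point_of P" and va: "v \<bullet> \<alpha> = 0"
      have "v \<in> X" using v unfolding P_def by (rule extreme_point_of_convex_hull)
      then obtain w lm where wl: "w \<in> weyl_group S" "lm \<in> \<Lambda>" "v = w lm" unfolding X_def by blast
      obtain w' where w': "w' \<in> weyl_group S" "w' \<circ> w = id" "w \<circ> w' = id"
        using W_inv[OF wl(1) S0] by blast
      have wo: "linear w'" "\<And>x y. w' x \<bullet> w' y = x \<bullet> y" using W_orth[OF w'(1) S0] by auto
      have injw': "inj w'" using w'(3) by (metis comp_apply id_apply injI)
      have "w' ` P \<subseteq> P" using WP w'(1) by blast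
      moreover have "P \<subseteq> w' ` P"
      proof
        fix x assume "x \<in> P"
        then have "w x \<in> P" using WP wl(1) by blast
        moreover have "w' (w x) = x" using w'(2) by (metis comp_apply id_apply)
        ultimately show "x \<in> w' ` P" by (metis image_eqI)
      qed
      ultimately have w'P: "w' ` P = P" by blast
      have lmv: "w' v = lm" using wl(3) w'(2) by (metis comp_apply id_apply)
      have "w' v extreme_point_of w' ` P" using ext_image[OF wo(1) injw'] v by blast
      then have lmext: "lm extreme_point_of P" using lmv w'P by simp
      have lmC: "lm \<in> fund_chamber S" using wl(2) assms(4) by blast
      have bR: "w' \<alpha> \<in> R" using W_R[OF w'(1) SR clos assms(8)] .
      have "lm \<bullet> w' \<alpha> = 0" using wo(2)[of v \<alpha>] lmv va by simp
      then have "lm \<in> frontier (fund_chamber S)"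
        using chamber_frontier[OF ss R0 lmC bR] by blast
      then show False using nd lmext by (simp add: nondegenerate_def)
    qed
    have p4: "rel_interior F \<inter> hyp \<alpha> \<noteq> {} \<longleftrightarrow> F \<inter> hyp \<alpha> \<noteq> {}"
      using nondeg_relint[OF polyP FP assms(7) _ ndv] rel_interior_subset by blast
    have p5: "l \<bullet> \<alpha> = 0"
      if rF: "root_refl \<alpha> ` F = F" and F': "F' facet_of P" "F \<subseteq> F'" "outward_normal l F' P" for F' l
    proof -
      have bh: "barycenter F \<in> hyp \<alpha>" using eqv[OF FP assms(7)] rF by blast
      have polyF: "polytope F" using face_of_polytope_polytope polyP FP by blast
      have "barycenter F \<in> F" using bary_relint[OF polyF assms(7)] rel_interior_subset by blast
      then have ne: "F' \<inter> hyp \<alpha> \<noteq> {}" using bh F'(2) by blast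
      have F'P: "F' face_of P" "F' \<noteq> {}" using F'(1) by (auto simp: facet_of_def)
      have "rel_interior F' \<inter> hyp \<alpha> \<noteq> {}" using nondeg_relint[OF polyP F'P ne ndv] .
      then have "root_refl \<alpha> ` F' = F'" using eqv[OF F'P] by blast
      then show ?thesis using facet_normal[of P \<alpha> F' l] assms(5) a0 rP F'(1,3)
        unfolding P_def X_def by blast
    qed
    show ?thesis using p4 p5 by blast
  qed
  show ?thesis using eqv[OF FP assms(7)] part3 unfolding P_def X_def by blast
qed

end
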